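(* Let $E$ be a reflexive Banach space with $E = V \oplus W$, where $V$ and $W$ are linear subspaces and $\dim V < +\infty$. Let $\Phi\colon E \to \mathbb{R}$ be a $C^1$-functional satisfying: (i) $\Phi$ is coercive on $W$, i.e. $\Phi(w) \to +\infty$ as $\|w\| \to \infty$, $w \in W$; (ii) for every $w \in W$, the map $v \mapsto \Phi(v+w)$, $V \to \mathbb{R}$, is quasi-concave; (iii) $\Phi(v+w) \to -\infty$ as $\|v\| \to +\infty$ ($v\in V$), uniformly for $w$ in bounded subsets of $W$; (iv) for every $v \in V$, the map $w \mapsto \Phi(v+w)$, $W\to\mathbb{R}$, is weakly lower semi-continuous. Then $\Phi$ admits a critical point $u \in E$ (i.e. $\Phi'(u)=0$) with $\Phi(u) = c$, where $$c = \min_{w \in W} \max_{v \in V} \Phi(v+w).$$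
   Context: A function $f\colon V \to \mathbb{R}$ is quasi-concave if $f(tx+(1-t)y) \ge \min\{f(x), f(y)\}$ for all $x,y \in V$ and $t \in [0,1]$ (equivalently, all superlevel sets $\{f \ge \alpha\}$ are convex). *)

theory Defs
  imports "HOL-Analysis.Analysis"
begin

definition reflexive_space :: "'a::real_normed_vector itself \<Rightarrow> bool" where
  "reflexive_space _ \<longleftrightarrow>
     (\<forall>\<phi> :: ('a \<Rightarrow>\<^sub>L real) \<Rightarrow>\<^sub>L real. \<exists>x::'a. \<forall>f. blinfun_apply \<phi> f = blinfun_apply f x)"

definition weak_topology :: "'a::real_normed_vector topology" where
  "weak_topology = topology_generated_by
     {{x. blinfun_apply f x \<in> U} | (f :: 'a \<Rightarrow>\<^sub>L real) U. open U}"

definition weakly_lsc_on :: "'a::real_normed_vector set \<Rightarrow> ('a \<Rightarrow> real) \<Rightarrow> bool" where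
  "weakly_lsc_on S g \<longleftrightarrow>
     (\<forall>\<alpha>. closedin (subtopology weak_topology S) {x\<in>S. g x \<le> \<alpha>})"

definition quasi_concave_on :: "'a::real_vector set \<Rightarrow> ('a \<Rightarrow> real) \<Rightarrow> bool" where
  "quasi_concave_on S f \<longleftrightarrow>
     (\<forall>x\<in>S. \<forall>y\<in>S. \<forall>t::real. 0 \<le> t \<and> t \<le> 1 \<longrightarrow>
        f (t *\<^sub>R x + (1 - t) *\<^sub>R y) \<ge> min (f x) (f y))"

end

theory Submission
  imports Defs
begin

definition ssum :: "'a::real_vector set \<Rightarrow> 'a set \<Rightarrow> 'a set" where
  "ssum A B = {a + b | a b. a \<in> A \<and> b \<in> B}"

lemma coeff_bound:
  fixes S :: "'a::real_normed_vector set"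
  assumes "subspace S" "s \<in> S"
  shows "\<bar>k\<bar> * infdist u S \<le> norm (s + k *\<^sub>R u)"
proof (cases "k = 0")
  case True then show ?thesis by simp
next
  case False
  have "- (inverse k) *\<^sub>R s \<in> S" using subspace_scale[OF assms, of "- inverse k"] by simp
  then have "infdist u S \<le> dist u (- (inverse k) *\<^sub>R s)" by (rule infdist_le)
  also have "\<dots> = norm (u + (inverse k) *\<^sub>R s)" by (simp add: dist_norm)
  also have "u + (inverse k) *\<^sub>R s = (inverse k) *\<^sub>R (s + k *\<^sub>R u)"
    using False by (simp add: algebra_simps)
  also have "norm \<dots> = norm (s + k *\<^sub>R u) / \<bar>k\<bar>" by (simp add: divide_inverse_commute)
  finally show ?thesis using False by (simp add: field_simps)
qed

lemma closed_ssum_line: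
  fixes S :: "'a::banach set"
  assumes sub: "subspace S" and cl: "closed S"
  shows "closed (ssum S (span {u}))"
proof (cases "u \<in> S")
  case True
  have "ssum S (span {u}) = S"
  proof
    show "ssum S (span {u}) \<subseteq> S" using True sub
      by (auto simp: ssum_def span_singleton intro: subspace_add subspace_scale)
    show "S \<subseteq> ssum S (span {u})" unfolding ssum_def
      by (force intro: span_zero)
  qed
  then show ?thesis using cl by simp
next
  case False
  have "S \<noteq> {}" using sub subspace_0 by blast
  then have dpos: "infdist u S > 0" using infdist_pos_not_in_closed[OF cl _ False] by simp
  show ?thesis unfolding closed_sequential_limits
  proof (intro allI impI, elim conjE)
    fix x l assume xin: "\<forall>n. x n \<in> ssum S (span {u})" and lim: "x \<longlonglongrightarrow> l"
    have "\<forall>n. \<exists>s k. s \<in> S \<and> x n = s + k *\<^sub>R u"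
      using xin unfolding ssum_def span_singleton by blast
    then obtain s k where sk: "\<And>n. s n \<in> S" "\<And>n. x n = s n + k n *\<^sub>R u" by metis
    have bd: "\<bar>k m - k n\<bar> \<le> norm (x m - x n) / infdist u S" for m n
    proof -
      have "x m - x n = (s m - s n) + (k m - k n) *\<^sub>R u" using sk by (simp add: algebra_simps)
      moreover have "s m - s n \<in> S" using sk sub by (simp add: subspace_diff)
      ultimately have "\<bar>k m - k n\<bar> * infdist u S \<le> norm (x m - x n)"
        using coeff_bound[OF sub] by metis
      then show ?thesis using dpos by (simp add: field_simps)
    qed
    have "Cauchy x" using lim by (rule LIMSEQ_imp_Cauchy)
    have "Cauchy k"
    proof (rule metric_CauchyI)
      fix e :: real assume "e > 0"
      then have "e * infdist u S > 0" using dpos by simp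
      then obtain M where M: "\<forall>m\<ge>M. \<forall>n\<ge>M. dist (x m) (x n) < e * infdist u S"
        using \<open>Cauchy x\<close> unfolding Cauchy_def by blast
      show "\<exists>M. \<forall>m\<ge>M. \<forall>n\<ge>M. dist (k m) (k n) < e"
      proof (intro exI allI impI)
        fix m n assume "m \<ge> M" "n \<ge> M"
        then have "norm (x m - x n) < e * infdist u S" using M by (simp add: dist_norm)
        then have "norm (x m - x n) / infdist u S < e" using dpos by (simp add: field_simps)
        then show "dist (k m) (k n) < e" using bd[of m n] by (simp add: dist_real_def)
      qed
    qed
    then obtain c where kc: "k \<longlonglongrightarrow> c" using Cauchy_convergent_iff convergent_def by blast
    have "(\<lambda>n. x n - k n *\<^sub>R u) \<longlonglongrightarrow> l - c *\<^sub>R u"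
      by (intro tendsto_intros lim kc)
    moreover have "\<And>n. x n - k n *\<^sub>R u = s n" using sk by simp
    ultimately have "s \<longlonglongrightarrow> l - c *\<^sub>R u" by simp
    then have "l - c *\<^sub>R u \<in> S" using cl sk(1) closed_sequentially by blast
    then show "l \<in> ssum S (span {u})" unfolding ssum_def span_singleton
    proof -
      have "l = (l - c *\<^sub>R u) + c *\<^sub>R u" by simp
      then show "l \<in> {a + b |a b. a \<in> S \<and> b \<in> range (\<lambda>k. k *\<^sub>R u)}"
        using \<open>l - c *\<^sub>R u \<in> S\<close> by blast
    qed
  qed
qed

lemma ssum_insert:
  "ssum S (span (insert u F)) = ssum (ssum S (span F)) (span {u})"
proof
  show "ssum S (span (insert u F)) \<subseteq> ssum (ssum S (span F)) (span {u})"
  proof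
    fix x assume "x \<in> ssum S (span (insert u F))"
    then obtain a b where ab: "x = a + b" "a \<in> S" "b \<in> span (insert u F)"
      unfolding ssum_def by blast
    then obtain k where k: "b - k *\<^sub>R u \<in> span F" using span_breakdown_eq by blast
    have "x = (a + (b - k *\<^sub>R u)) + k *\<^sub>R u" using ab by simp
    moreover have "a + (b - k *\<^sub>R u) \<in> ssum S (span F)" using ab k unfolding ssum_def by blast
    moreover have "k *\<^sub>R u \<in> span {u}" by (simp add: span_base span_scale)
    ultimately show "x \<in> ssum (ssum S (span F)) (span {u})" unfolding ssum_def by blast
  qed
  show "ssum (ssum S (span F)) (span {u}) \<subseteq> ssum S (span (insert u F))"
  proof
    fix x assume "x \<in> ssum (ssum S (span F)) (span {u})"
    then obtain a t c where act: "x = (a + t) + c" "a \<in> S" "t \<in> span F" "c \<in> span {u}"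
      unfolding ssum_def by blast
    have "t \<in> span (insert u F)" using act(3) span_mono[of F "insert u F"] by blast
    moreover have "c \<in> span (insert u F)" using act(4) span_mono[of "{u}" "insert u F"] by blast
    ultimately have "t + c \<in> span (insert u F)" by (rule span_add)
    moreover have "x = a + (t + c)" using act by (simp add: algebra_simps)
    ultimately show "x \<in> ssum S (span (insert u F))" using act(2) unfolding ssum_def by blast
  qed
qed

lemma subspace_ssum: "subspace S \<Longrightarrow> subspace T \<Longrightarrow> subspace (ssum S T)"
  unfolding ssum_def by (rule subspace_sums)

lemma closed_ssum_span:
  fixes S :: "'a::banach set"
  assumes "subspace S" "closed S" "finite F"
  shows "closed (ssum S (span F))"
  using assms(3)
proof (induction F rule: finite_induct)
  case empty
  have "ssum S (span {}) = S" unfolding ssum_def by auto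
  then show ?case using assms by simp
next
  case (insert u F)
  have "subspace (ssum S (span F))" using assms(1) by (simp add: subspace_ssum)
  then show ?case using closed_ssum_line[of "ssum S (span F)" u] insert ssum_insert by metis
qed

lemma closed_span_finite:
  fixes F :: "'a::banach set"
  assumes "finite F" shows "closed (span F)"
proof -
  have "ssum {0} (span F) = span F" unfolding ssum_def by auto
  moreover have "subspace {0::'a}" by (simp add: subspace_0 subspace_def)
  ultimately show ?thesis using closed_ssum_span[of "{0}" F] assms by simp
qed

lemma span_bounded_subseq:
  fixes F :: "'a::banach set"
  assumes "finite F"
  shows "\<forall>x. (\<forall>n. x n \<in> span F) \<and> bounded (range x) \<longrightarrow> (\<exists>l (r::nat\<Rightarrow>nat). strict_mono r \<and> (x \<circ> r) \<longlonglongrightarrow> l)"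
  using assms
proof (induction F rule: finite_induct)
  case empty
  show ?case
  proof (intro allI impI)
    fix x :: "nat \<Rightarrow> 'a" assume "(\<forall>n. x n \<in> span {}) \<and> bounded (range x)"
    then have "\<And>n. x n = 0" by simp
    then show "\<exists>l (r::nat\<Rightarrow>nat). strict_mono r \<and> (x \<circ> r) \<longlonglongrightarrow> l"
      by (rule_tac x=0 in exI, rule_tac x=id in exI) (simp add: strict_mono_id o_def)
  qed
next
  case (insert u F)
  show ?case
  proof (cases "u \<in> span F")
    case True
    then have "span (insert u F) = span F" by (rule span_redundant)
    then show ?thesis using insert.IH by simp
  next
    case False
    have "span F \<noteq> {}" using span_zero by blast
    then have dpos: "infdist u (span F) > 0"
      using infdist_pos_not_in_closed[OF closed_span_finite[OF insert.hyps(1)] _ False] by simp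
    show ?thesis
    proof (intro allI impI, elim conjE)
      fix x :: "nat \<Rightarrow> 'a"
      assume xin: "\<forall>n. x n \<in> span (insert u F)" and bx: "bounded (range x)"
      have "\<forall>n. \<exists>k. x n - k *\<^sub>R u \<in> span F" using xin span_breakdown_eq by blast
      then obtain k where k: "\<And>n. x n - k n *\<^sub>R u \<in> span F" by metis
      define s where "s n = x n - k n *\<^sub>R u" for n
      obtain B where B: "\<And>n. norm (x n) \<le> B" using bx unfolding bounded_iff by blast
      have kb: "\<bar>k n\<bar> \<le> B / infdist u (span F)" for n
      proof -
        have "\<bar>k n\<bar> * infdist u (span F) \<le> norm (s n + k n *\<^sub>R u)"
          by (rule coeff_bound) (auto simp: s_def k)
        also have "\<dots> = norm (x n)" by (simp add: s_def)
        finally show ?thesis using B[of n] dpos by (simp add: field_simps)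
      qed
      have sb: "bounded (range s)"
      proof -
        have "norm (s n) \<le> B + B / infdist u (span F) * norm u" for n
        proof -
          have "norm (s n) \<le> norm (x n) + norm (k n *\<^sub>R u)" unfolding s_def by (rule norm_triangle_ineq4)
          also have "\<dots> \<le> B + B / infdist u (span F) * norm u"
            using B[of n] mult_right_mono[OF kb[of n] norm_ge_zero[of u]] by (intro add_mono) auto
          finally show ?thesis .
        qed
        then show ?thesis unfolding bounded_iff by blast
      qed
      have "\<forall>n. s n \<in> span F" using k s_def by simp
      then obtain ls r1 where r1: "strict_mono r1" "(s \<circ> r1) \<longlonglongrightarrow> ls" using insert.IH sb by blast
      have "bounded (range (k \<circ> r1))" unfolding bounded_iff using kb by auto
      then obtain lk r2 where r2: "strict_mono r2" "((k \<circ> r1) \<circ> r2) \<longlonglongrightarrow> lk"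
        using bounded_imp_convergent_subsequence by blast
      have "((s \<circ> r1) \<circ> r2) \<longlonglongrightarrow> ls" using r1(2) r2(1) by (rule LIMSEQ_subseq_LIMSEQ)
      then have "(\<lambda>n. ((s \<circ> r1) \<circ> r2) n + ((k \<circ> r1) \<circ> r2) n *\<^sub>R u) \<longlonglongrightarrow> ls + lk *\<^sub>R u"
        by (intro tendsto_intros r2(2))
      moreover have "(\<lambda>n. ((s \<circ> r1) \<circ> r2) n + ((k \<circ> r1) \<circ> r2) n *\<^sub>R u) = x \<circ> (r1 \<circ> r2)"
        by (auto simp: s_def)
      ultimately show "\<exists>l (r::nat\<Rightarrow>nat). strict_mono r \<and> (x \<circ> r) \<longlonglongrightarrow> l"
        using strict_mono_o[OF r1(1) r2(1)] by metis
    qed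
  qed
qed

lemma compact_span_cball:
  fixes F :: "'a::banach set"
  assumes "finite F"
  shows "compact (span F \<inter> cball 0 R)"
  unfolding compact_eq_seq_compact_metric
proof (rule seq_compactI)
  fix x :: "nat \<Rightarrow> 'a" assume xin: "\<forall>n. x n \<in> span F \<inter> cball 0 R"
  then have "bounded (range x)" unfolding bounded_iff by (auto simp: dist_norm)
  then obtain l r where lr: "strict_mono r" "(x \<circ> r) \<longlonglongrightarrow> l"
    using span_bounded_subseq[OF assms] xin by blast
  have "closed (span F \<inter> cball 0 R)" using closed_span_finite[OF assms] by blast
  moreover have "\<And>n. (x \<circ> r) n \<in> span F \<inter> cball 0 R" using xin by simp
  ultimately have "l \<in> span F \<inter> cball 0 R" using lr(2) closed_sequentially by blast
  then show "\<exists>l\<in>span F \<inter> cball 0 R. \<exists>r::nat\<Rightarrow>nat. strict_mono r \<and> (x \<circ> r) \<longlonglongrightarrow> l" using lr by blast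
qed

lemma sep_functional:
  fixes V W :: "'a::banach set"
  assumes subV: "subspace V" and subW: "subspace W" and closedW: "closed W"
    and inter: "V \<inter> W = {0}"
    and sum: "\<And>y. \<exists>a\<in>V. \<exists>b\<in>W. y = a + b"
    and finB: "finite B" and VB: "V = span B"
    and xW: "x \<notin> W"
  shows "\<exists>f::'a \<Rightarrow>\<^sub>L real. (\<forall>w\<in>W. blinfun_apply f w = 0) \<and> blinfun_apply f x \<noteq> 0"
proof -
  obtain v w where vw: "v \<in> V" "w \<in> W" "x = v + w" using sum by blast
  have v0: "v \<noteq> 0" using vw xW by auto
  have "independent {v}" using v0 independent_insertI[of v "{}"] by simp
  then obtain B0 where B0: "{v} \<subseteq> B0" "B0 \<subseteq> V" "independent B0" "V \<subseteq> span B0"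
    using maximal_independent_subset_extend[of "{v}" V] vw(1) by blast
  have finB0: "finite B0" using independent_span_bound[OF finB B0(3)] B0(2) VB by blast
  define G where "G = B0 - {v}"
  define H where "H = ssum W (span G)"
  have subH: "subspace H" unfolding H_def by (simp add: subspace_ssum subW)
  have clH: "closed H" unfolding H_def using closed_ssum_span[OF subW closedW] finB0 G_def by simp
  have spanV: "span B0 \<subseteq> V" using span_minimal[OF B0(2) subV] .
  have vH: "v \<notin> H"
  proof
    assume "v \<in> H"
    then obtain a b where ab: "v = a + b" "a \<in> W" "b \<in> span G" unfolding H_def ssum_def by blast
    have "b \<in> V" using ab(3) spanV span_mono[of G B0] G_def by blast
    then have "a \<in> V" using ab(1) vw(1) subV by (metis add_diff_cancel_right' subspace_diff)
    then have "a = 0" using ab(2) inter by blast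
    then have "v \<in> span (B0 - {v})" using ab G_def by simp
    then show False using B0(1,3) dependent_def by blast
  qed
  have ins: "insert v G = B0" using B0(1) G_def by blast
  have ex: "\<exists>t. y - t *\<^sub>R v \<in> H" for y
  proof -
    obtain a b where ab: "a \<in> V" "b \<in> W" "y = a + b" using sum by blast
    have "a \<in> span (insert v G)" using ab(1) B0(4) ins by blast
    then obtain t where t: "a - t *\<^sub>R v \<in> span G" using span_breakdown_eq by blast
    have "y - t *\<^sub>R v = b + (a - t *\<^sub>R v)" using ab by simp
    then show ?thesis using t ab(2) unfolding H_def ssum_def by blast
  qed
  have uniq: "t = t'" if "y - t *\<^sub>R v \<in> H" "y - t' *\<^sub>R v \<in> H" for y t t'
  proof (rule ccontr)
    assume ne: "t \<noteq> t'"
    have "(y - t *\<^sub>R v) - (y - t' *\<^sub>R v) \<in> H" using that subH subspace_diff by blast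
    then have "(t' - t) *\<^sub>R v \<in> H" by (simp add: algebra_simps)
    then have "inverse (t' - t) *\<^sub>R ((t' - t) *\<^sub>R v) \<in> H" using subH subspace_scale by blast
    then have "v \<in> H" using ne by simp
    then show False using vH by simp
  qed
  define f where "f y = (THE t. y - t *\<^sub>R v \<in> H)" for y
  have fH: "f y = t" if "y - t *\<^sub>R v \<in> H" for y t
    unfolding f_def using that uniq by blast
  have fmem: "y - f y *\<^sub>R v \<in> H" for y
    using ex[of y] fH by metis
  have lin: "linear f"
  proof
    fix y1 y2
    have "(y1 + y2) - (f y1 + f y2) *\<^sub>R v = (y1 - f y1 *\<^sub>R v) + (y2 - f y2 *\<^sub>R v)"
      by (simp add: algebra_simps)
    then have "(y1 + y2) - (f y1 + f y2) *\<^sub>R v \<in> H" using fmem subH by (metis subspace_add)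
    then show "f (y1 + y2) = f y1 + f y2" by (rule fH)
  next
    fix c y
    have "c *\<^sub>R y - (c * f y) *\<^sub>R v = c *\<^sub>R (y - f y *\<^sub>R v)" by (simp add: algebra_simps)
    then have "c *\<^sub>R y - (c * f y) *\<^sub>R v \<in> H" using fmem subH by (metis subspace_scale)
    then show "f (c *\<^sub>R y) = c *\<^sub>R f y" using fH by simp
  qed
  have "H \<noteq> {}" using subH subspace_0 by blast
  then have dpos: "infdist v H > 0" using infdist_pos_not_in_closed[OF clH _ vH] by simp
  have bl: "bounded_linear f"
  proof (rule bounded_linear_intro[where K="inverse (infdist v H)"])
    fix y
    have "\<bar>f y\<bar> * infdist v H \<le> norm ((y - f y *\<^sub>R v) + f y *\<^sub>R v)"
      by (rule coeff_bound[OF subH fmem])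
    then have "\<bar>f y\<bar> * infdist v H \<le> norm y" by simp
    then show "norm (f y) \<le> norm y * inverse (infdist v H)" using dpos
      by (simp add: field_simps)
  qed (use lin in \<open>auto simp: linear_add linear_scale\<close>)
  have fW: "f w' = 0" if "w' \<in> W" for w'
  proof (rule fH)
    have "w' = w' + 0" by simp
    moreover have "(0::'a) \<in> span G" by (rule span_zero)
    ultimately show "w' - 0 *\<^sub>R v \<in> H" using that unfolding H_def ssum_def by force
  qed
  have fx: "f x = 1"
  proof (rule fH)
    have "x - 1 *\<^sub>R v = w + 0" using vw by simp
    moreover have "(0::'a) \<in> span G" by (rule span_zero)
    ultimately show "x - 1 *\<^sub>R v \<in> H" using vw(2) unfolding H_def ssum_def by blast
  qed
  show ?thesis
    by (rule exI[of _ "Blinfun f"]) (simp add: bounded_linear_Blinfun_apply[OF bl] fW fx)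
qed

lemma weak_open_preimage:
  assumes "openin (weak_topology :: 'a::real_normed_vector topology) U"
  shows "\<exists>Ob. open Ob \<and> U = (\<lambda>x. \<lambda>f::'a \<Rightarrow>\<^sub>L real. blinfun_apply f x) -` Ob"
proof -
  have "generate_topology_on {{x. blinfun_apply f x \<in> U} | (f :: 'a \<Rightarrow>\<^sub>L real) U. open U} U"
    using assms unfolding weak_topology_def by (rule openin_topology_generated_by)
  then show ?thesis
  proof (induction rule: generate_topology_on.induct)
    case Empty
    then show ?case by (rule_tac x="{}" in exI) auto
  next
    case (Int a b)
    obtain O1 where O1: "open O1" "a = (\<lambda>x (f::'a \<Rightarrow>\<^sub>L real). blinfun_apply f x) -` O1"
      using Int.IH(1) by blast
    obtain O2 where O2: "open O2" "b = (\<lambda>x (f::'a \<Rightarrow>\<^sub>L real). blinfun_apply f x) -` O2"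
      using Int.IH(2) by blast
    have "open (O1 \<inter> O2)" using O1 O2 by blast
    moreover have "a \<inter> b = (\<lambda>x (f::'a \<Rightarrow>\<^sub>L real). blinfun_apply f x) -` (O1 \<inter> O2)" using O1 O2 by simp
    ultimately show ?case by blast
  next
    case (UN K)
    from UN.IH obtain Ob where Ob: "\<And>k. k \<in> K \<Longrightarrow> open (Ob k) \<and> k = (\<lambda>x (f::'a \<Rightarrow>\<^sub>L real). blinfun_apply f x) -` Ob k"
      by metis
    show ?case
    proof (rule exI[of _ "\<Union>k\<in>K. Ob k"], intro conjI)
      show "open (\<Union>k\<in>K. Ob k)" using Ob by blast
      show "\<Union>K = (\<lambda>x (f::'a \<Rightarrow>\<^sub>L real). blinfun_apply f x) -` (\<Union>k\<in>K. Ob k)"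
        using Ob by blast
    qed
  next
    case (Basis s)
    then obtain f :: "'a \<Rightarrow>\<^sub>L real" and U :: "real set" where fU: "s = {x. blinfun_apply f x \<in> U}" "open U" by blast
    have "open ((\<lambda>\<phi>::('a \<Rightarrow>\<^sub>L real) \<Rightarrow> real. \<phi> f) -` U \<inter> UNIV)"
      using continuous_on_open_vimage[of UNIV "\<lambda>\<phi>::('a \<Rightarrow>\<^sub>L real) \<Rightarrow> real. \<phi> f"] fU(2)
      by simp
    then show ?case using fU(1) by (rule_tac x="(\<lambda>\<phi>::('a \<Rightarrow>\<^sub>L real) \<Rightarrow> real. \<phi> f) -` U" in exI) auto
  qed
qed

lemma topspace_weak: "topspace (weak_topology :: 'a::real_normed_vector topology) = UNIV"
proof -
  have "UNIV \<in> {{x. blinfun_apply f x \<in> U} | (f :: 'a \<Rightarrow>\<^sub>L real) U. open U}"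
    by (rule CollectI, rule_tac x=0 in exI, rule_tac x=UNIV in exI) simp
  then show ?thesis unfolding weak_topology_def topology_generated_by_topspace by blast
qed

lemma weak_compact:
  fixes W :: "'a::banach set"
  assumes refl: "reflexive_space TYPE('a)"
    and sep: "\<And>x. x \<notin> W \<Longrightarrow> \<exists>f::'a \<Rightarrow>\<^sub>L real. (\<forall>w\<in>W. blinfun_apply f w = 0) \<and> blinfun_apply f x \<noteq> 0"
  shows "compactin weak_topology {x\<in>W. \<forall>f::'a \<Rightarrow>\<^sub>L real. \<bar>blinfun_apply f x\<bar> \<le> R * norm f}"
proof -
  define K where "K = {x\<in>W. \<forall>f::'a \<Rightarrow>\<^sub>L real. \<bar>blinfun_apply f x\<bar> \<le> R * norm f}"
  define ev where "ev x = (\<lambda>f::'a \<Rightarrow>\<^sub>L real. blinfun_apply f x)" for x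
  define Q where "Q = {\<phi> :: ('a \<Rightarrow>\<^sub>L real) \<Rightarrow> real. (\<forall>f. \<bar>\<phi> f\<bar> \<le> R * norm f)
     \<and> (\<forall>f g. \<phi> (f + g) = \<phi> f + \<phi> g) \<and> (\<forall>a f. \<phi> (a *\<^sub>R f) = a * \<phi> f)
     \<and> (\<forall>f. (\<forall>w\<in>W. blinfun_apply f w = 0) \<longrightarrow> \<phi> f = 0)}"
  define Box where "Box = PiE UNIV (\<lambda>f::'a \<Rightarrow>\<^sub>L real. {- R * norm f .. R * norm f})"
  have cBox: "compact Box"
  proof -
    have "compactin (product_topology (\<lambda>i. euclidean) UNIV) Box"
      unfolding Box_def compactin_PiE by simp
    then show ?thesis by (simp add: euclidean_product_topology)
  qed
  have cont: "continuous_on UNIV (\<lambda>\<phi>::('a \<Rightarrow>\<^sub>L real) \<Rightarrow> real. \<phi> f)" for f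
    by simp
  have clQ: "closed Q"
  proof -
    have Qeq: "Q = (\<Inter>f. {\<phi>. \<bar>\<phi> f\<bar> \<le> R * norm f}) \<inter> (\<Inter>f. \<Inter>g. {\<phi>. \<phi> (f + g) = \<phi> f + \<phi> g})
       \<inter> (\<Inter>a. \<Inter>f. {\<phi>. \<phi> (a *\<^sub>R f) = a * \<phi> f}) \<inter> (\<Inter>f\<in>{f. \<forall>w\<in>W. blinfun_apply f w = 0}. {\<phi>. \<phi> f = 0})"
      unfolding Q_def by blast
    have c1: "closed {\<phi>::('a \<Rightarrow>\<^sub>L real) \<Rightarrow> real. \<bar>\<phi> f\<bar> \<le> R * norm f}" for f
      by (rule closed_Collect_le) (intro continuous_intros cont)+
    have c2: "closed {\<phi>::('a \<Rightarrow>\<^sub>L real) \<Rightarrow> real. \<phi> (f + g) = \<phi> f + \<phi> g}" for f g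
      by (rule closed_Collect_eq) (intro continuous_intros cont)+
    have c3: "closed {\<phi>::('a \<Rightarrow>\<^sub>L real) \<Rightarrow> real. \<phi> (a *\<^sub>R f) = a * \<phi> f}" for a f
      by (rule closed_Collect_eq) (intro continuous_intros cont)+
    have c4: "closed {\<phi>::('a \<Rightarrow>\<^sub>L real) \<Rightarrow> real. \<phi> f = 0}" for f
      by (rule closed_Collect_eq) (intro continuous_intros cont)+
    show ?thesis unfolding Qeq by (intro closed_Int closed_INT ballI c1 c2 c3 c4)
  qed
  have QBox: "Q \<subseteq> Box" unfolding Q_def Box_def by (auto simp: PiE_iff abs_le_iff, metis minus_le_iff)
  have cQ: "compact Q"
  proof -
    have "compact (Box \<inter> Q)" using cBox clQ by blast
    moreover have "Box \<inter> Q = Q" using QBox by blast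
    ultimately show ?thesis by simp
  qed
  have evK: "ev x \<in> Q" if "x \<in> K" for x
    using that unfolding K_def Q_def ev_def by (auto simp: blinfun.add_left blinfun.scaleR_left)
  have Qev: "\<exists>x\<in>K. \<phi> = ev x" if "\<phi> \<in> Q" for \<phi>
  proof -
    have bl: "bounded_linear \<phi>"
    proof (rule bounded_linear_intro[where K="\<bar>R\<bar>"])
      fix f
      have "\<bar>\<phi> f\<bar> \<le> R * norm f" using that Q_def by blast
      also have "\<dots> \<le> norm f * \<bar>R\<bar>" by (simp add: mult.commute mult_right_mono)
      finally show "norm (\<phi> f) \<le> norm f * \<bar>R\<bar>" by simp
    qed (use that Q_def in auto)
    obtain x where x: "\<forall>f. blinfun_apply (Blinfun \<phi>) f = blinfun_apply f x"
      using refl unfolding reflexive_space_def by blast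
    then have phix: "\<phi> f = blinfun_apply f x" for f using bounded_linear_Blinfun_apply[OF bl] by simp
    have "x \<in> W"
    proof (rule ccontr)
      assume "x \<notin> W"
      then obtain f :: "'a \<Rightarrow>\<^sub>L real" where f: "\<forall>w\<in>W. blinfun_apply f w = 0" "blinfun_apply f x \<noteq> 0" using sep by blast
      from that have "\<forall>f. (\<forall>w\<in>W. blinfun_apply f w = 0) \<longrightarrow> \<phi> f = 0" unfolding Q_def by blast
      then have "\<phi> f = 0" using f(1) by blast
      then show False using phix f(2) by simp
    qed
    moreover have "\<forall>f. \<bar>blinfun_apply f x\<bar> \<le> R * norm f" using that phix Q_def by auto
    ultimately have "x \<in> K" unfolding K_def by blast
    moreover have "\<phi> = ev x" using phix unfolding ev_def by auto
    ultimately show ?thesis by blast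
  qed
  have "compactin weak_topology K"
    unfolding compactin_def
  proof (intro conjI allI impI)
    show "K \<subseteq> topspace weak_topology" by (simp add: topspace_weak)
  next
    fix \<U> assume U: "Ball \<U> (openin weak_topology) \<and> K \<subseteq> \<Union>\<U>"
    then have "\<forall>u\<in>\<U>. \<exists>Ob. open Ob \<and> u = ev -` Ob"
      using weak_open_preimage unfolding ev_def by blast
    then obtain Ob where Ob: "\<And>u. u \<in> \<U> \<Longrightarrow> open (Ob u) \<and> u = ev -` Ob u" by metis
    have opn: "\<And>B. B \<in> Ob ` \<U> \<Longrightarrow> open B" using Ob by blast
    have qcov: "Q \<subseteq> \<Union>(Ob ` \<U>)"
    proof
      fix \<phi> assume "\<phi> \<in> Q"
      then obtain x where x: "x \<in> K" "\<phi> = ev x" using Qev by blast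
      then obtain u where "u \<in> \<U>" "x \<in> u" using U by blast
      then show "\<phi> \<in> \<Union>(Ob ` \<U>)" using Ob x by blast
    qed
    then obtain T where T: "T \<subseteq> Ob ` \<U>" "finite T" "Q \<subseteq> \<Union>T"
      using compactE[OF cQ qcov opn] by blast
    then obtain \<U>' where U': "\<U>' \<subseteq> \<U>" "finite \<U>'" "T = Ob ` \<U>'"
      by (meson finite_subset_image)
    show "\<exists>\<F>. finite \<F> \<and> \<F> \<subseteq> \<U> \<and> K \<subseteq> \<Union>\<F>"
    proof (intro exI conjI)
      show "K \<subseteq> \<Union>\<U>'"
      proof
        fix x assume "x \<in> K"
        then have "ev x \<in> Q" by (rule evK)
        then obtain u where "u \<in> \<U>'" "ev x \<in> Ob u" using T U' by blast
        then show "x \<in> \<Union>\<U>'" using Ob U'(1) by blast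
      qed
    qed (use U' in auto)
  qed
  then show ?thesis unfolding K_def .
qed

lemma komiya_two:
  fixes M K :: "'a::real_normed_vector set" and W :: "'b::real_vector set"
    and F :: "'a \<Rightarrow> 'b \<Rightarrow> real"
  assumes lin: "\<And>v d1 d2 a b. v \<in> M \<Longrightarrow> d1 \<in> W \<Longrightarrow> d2 \<in> W \<Longrightarrow>
                   F v (a *\<^sub>R d1 + b *\<^sub>R d2) = a * F v d1 + b * F v d2"
    and comb: "\<And>d1 d2 a b. d1 \<in> W \<Longrightarrow> d2 \<in> W \<Longrightarrow> a *\<^sub>R d1 + b *\<^sub>R d2 \<in> W"
    and cont: "\<And>d. d \<in> W \<Longrightarrow> continuous_on M (\<lambda>v. F v d)"
    and cvx: "\<And>d. d \<in> W \<Longrightarrow> convex {v\<in>M. F v d \<ge> 0}"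
    and KM: "K \<subseteq> M" and cK: "compact K" and vK: "convex K"
    and HK: "\<And>d. d \<in> W \<Longrightarrow> \<exists>v\<in>K. F v d \<ge> 0"
    and d1: "d1 \<in> W" and d2: "d2 \<in> W"
  shows "\<exists>v\<in>K. F v d1 \<ge> 0 \<and> F v d2 \<ge> 0"
proof (rule ccontr)
  assume neg: "\<not> ?thesis"
  define C1 where "C1 = {v\<in>K. 0 \<le> F v d1}"
  define C2 where "C2 = {v\<in>K. 0 \<le> F v d2}"
  have disj: "C1 \<inter> C2 = {}" using neg C1_def C2_def by auto
  define dl where "dl l = (1 - l) *\<^sub>R d1 + l *\<^sub>R d2" for l :: real
  define D where "D l = {v\<in>K. 0 \<le> F v (dl l)}" for l
  have dlW: "dl l \<in> W" for l unfolding dl_def using comb d1 d2 by blast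
  have Fdl: "F v (dl l) = (1 - l) * F v d1 + l * F v d2" if "v \<in> K" for v l
    unfolding dl_def using lin[of v d1 d2] that KM d1 d2 by blast
  have clK: "closed K" using cK by (rule compact_imp_closed)
  have contK: "continuous_on K (\<lambda>v. F v d)" if "d \<in> W" for d
    using cont[OF that] KM by (rule continuous_on_subset)
  have clC: "closed {v\<in>K. 0 \<le> F v d}" if "d \<in> W" for d
    using continuous_on_closed_Collect_le[OF continuous_on_const contK[OF that] clK] by simp
  have DC: "D l \<subseteq> C1 \<union> C2" if "0 \<le> l" "l \<le> 1" for l
  proof
    fix v assume "v \<in> D l"
    then have v: "v \<in> K" "0 \<le> (1 - l) * F v d1 + l * F v d2" unfolding D_def using Fdl by auto
    show "v \<in> C1 \<union> C2"
    proof (rule ccontr)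
      assume "v \<notin> C1 \<union> C2"
      then have "F v d1 < 0" "F v d2 < 0" using v(1) C1_def C2_def by auto
      then have "(1 - l) * F v d1 + l * F v d2 < 0" using that by (intro convex_bound_lt) auto
      then show False using v(2) by simp
    qed
  qed
  have Dne: "D l \<noteq> {}" for l using HK[OF dlW[of l]] D_def by auto
  have Dconn: "connected (D l)" for l
  proof -
    have "D l = K \<inter> {v\<in>M. F v (dl l) \<ge> 0}" unfolding D_def using KM by auto
    then have "convex (D l)" using vK cvx[OF dlW[of l]] by (simp add: convex_Int)
    then show ?thesis by (rule convex_connected)
  qed
  have dich: "D l \<subseteq> C1 \<or> D l \<subseteq> C2" if "0 \<le> l" "l \<le> 1" for l
  proof (rule ccontr)
    assume "\<not> (D l \<subseteq> C1 \<or> D l \<subseteq> C2)"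
    then have "C1 \<inter> D l \<noteq> {}" "C2 \<inter> D l \<noteq> {}" using DC[OF that] by auto
    moreover have "closed C1" "closed C2" using clC d1 d2 C1_def C2_def by auto
    ultimately show False using Dconn[of l] DC[OF that] disj unfolding connected_closed by blast
  qed
  define g where "g p = (1 - fst p) * F (snd p) d1 + fst p * F (snd p) d2" for p :: "real \<times> 'a"
  have c1: "continuous_on ({0..1} \<times> K) (\<lambda>p. F (snd p) d)" if "d \<in> W" for d
    by (rule continuous_on_compose2[OF contK[OF that] continuous_on_snd]) auto
  have cg: "continuous_on ({0..1} \<times> K) g" unfolding g_def
    by (intro continuous_intros c1 d1 d2)
  have clS: "closed ({0..1::real} \<times> K)" using clK by (simp add: closed_Times)
  have cS: "compact ({0..1::real} \<times> K)" using cK by (simp add: compact_Times)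
  define I where "I e = fst ` ({p \<in> {0..1} \<times> K. 0 \<le> g p} \<inter> {p \<in> {0..1} \<times> K. 0 \<le> F (snd p) e})" for e
  have clI: "closed (I e)" if "e \<in> W" for e
  proof -
    define X where "X = {p \<in> {0..1} \<times> K. 0 \<le> g p} \<inter> {p \<in> {0..1} \<times> K. 0 \<le> F (snd p) e}"
    have "closed X"
      using continuous_on_closed_Collect_le[OF continuous_on_const cg clS]
        continuous_on_closed_Collect_le[OF continuous_on_const c1[OF that] clS] unfolding X_def
      by (intro closed_Int) simp_all
    then have "compact (({0..1} \<times> K) \<inter> X)" by (rule compact_Int_closed[OF cS])
    moreover have "({0..1} \<times> K) \<inter> X = X" unfolding X_def by blast
    ultimately have "compact X" by simp
    then have "compact (I e)" unfolding I_def X_def[symmetric] by (intro compact_continuous_image continuous_on_fst continuous_on_id)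
    then show ?thesis by (rule compact_imp_closed)
  qed
  have Iiff: "l \<in> I e \<longleftrightarrow> (0 \<le> l \<and> l \<le> 1 \<and> (\<exists>v\<in>D l. 0 \<le> F v e))" for l e
  proof -
    have "l \<in> I e \<longleftrightarrow> (\<exists>v. (l, v) \<in> {p \<in> {0..1} \<times> K. 0 \<le> g p} \<inter> {p \<in> {0..1} \<times> K. 0 \<le> F (snd p) e})"
      unfolding I_def by force
    also have "\<dots> \<longleftrightarrow> (0 \<le> l \<and> l \<le> 1 \<and> (\<exists>v\<in>D l. 0 \<le> F v e))"
      unfolding D_def g_def using Fdl by auto
    finally show ?thesis .
  qed
  have cover: "{0..1} \<subseteq> I d1 \<union> I d2"
  proof
    fix l :: real assume l: "l \<in> {0..1}"
    obtain v where "v \<in> D l" using Dne by blast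
    then show "l \<in> I d1 \<union> I d2" using DC[of l] l Iiff C1_def C2_def by auto
  qed
  have dis: "I d1 \<inter> I d2 \<inter> {0..1} = {}"
  proof (rule ccontr)
    assume "I d1 \<inter> I d2 \<inter> {0..1} \<noteq> {}"
    then obtain l where l: "l \<in> I d1" "l \<in> I d2" by blast
    then obtain v v' where "v \<in> D l" "0 \<le> F v d1" "v' \<in> D l" "0 \<le> F v' d2" "0 \<le> l" "l \<le> 1"
      using Iiff by meson
    moreover have "v \<in> K" "v' \<in> K" using calculation D_def by auto
    ultimately show False using dich[of l] disj C1_def C2_def by blast
  qed
  have "0 \<in> I d1"
  proof -
    obtain v where "v \<in> D 0" using Dne by blast
    moreover have "F v (dl 0) = F v d1" if "v \<in> K" for v using Fdl[OF that, of 0] by simp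
    ultimately show ?thesis using Iiff D_def by auto
  qed
  moreover have "1 \<in> I d2"
  proof -
    obtain v where "v \<in> D 1" using Dne by blast
    moreover have "F v (dl 1) = F v d2" if "v \<in> K" for v using Fdl[OF that, of 1] by simp
    ultimately show ?thesis using Iiff D_def by auto
  qed
  ultimately have ne: "I d1 \<inter> {0..1} \<noteq> {}" "I d2 \<inter> {0..1} \<noteq> {}" by auto
  have "connected {0..1::real}" by simp
  then show False
    unfolding connected_closed using clI[OF d1] clI[OF d2] cover dis ne by blast
qed

lemma komiya_list:
  fixes M :: "'a::real_normed_vector set" and W :: "'b::real_vector set"
    and F :: "'a \<Rightarrow> 'b \<Rightarrow> real"
  assumes lin: "\<And>v d1 d2 a b. v \<in> M \<Longrightarrow> d1 \<in> W \<Longrightarrow> d2 \<in> W \<Longrightarrow>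
                   F v (a *\<^sub>R d1 + b *\<^sub>R d2) = a * F v d1 + b * F v d2"
    and comb: "\<And>d1 d2 a b. d1 \<in> W \<Longrightarrow> d2 \<in> W \<Longrightarrow> a *\<^sub>R d1 + b *\<^sub>R d2 \<in> W"
    and cont: "\<And>d. d \<in> W \<Longrightarrow> continuous_on M (\<lambda>v. F v d)"
    and cvx: "\<And>d. d \<in> W \<Longrightarrow> convex {v\<in>M. F v d \<ge> 0}"
    and W0: "0 \<in> W"
  shows "set ds \<subseteq> W \<Longrightarrow> \<forall>K. K \<subseteq> M \<and> compact K \<and> convex K \<and> (\<forall>d\<in>W. \<exists>v\<in>K. F v d \<ge> 0)
            \<longrightarrow> (\<exists>v\<in>K. \<forall>d\<in>set ds. F v d \<ge> 0)"
proof (induction ds)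
  case Nil
  then show ?case using W0 by auto
next
  case (Cons e ds)
  show ?case
  proof (intro allI impI, elim conjE)
    fix K assume KM: "K \<subseteq> M" and cK: "compact K" and vK: "convex K" and HK: "\<forall>d\<in>W. \<exists>v\<in>K. F v d \<ge> 0"
    have eW: "e \<in> W" using Cons.prems by simp
    define K' where "K' = {v\<in>K. 0 \<le> F v e}"
    have "closed K'"
      unfolding K'_def
      using continuous_on_closed_Collect_le[OF continuous_on_const continuous_on_subset[OF cont[OF eW] KM] compact_imp_closed[OF cK]]
      by simp
    moreover have "K' = K \<inter> K'" unfolding K'_def by blast
    ultimately have cK': "compact K'" using compact_Int_closed[OF cK] by metis
    have "K' = K \<inter> {v\<in>M. F v e \<ge> 0}" unfolding K'_def using KM by auto
    then have vK': "convex K'" using vK cvx[OF eW] by (simp add: convex_Int)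
    have HK': "\<forall>d\<in>W. \<exists>v\<in>K'. F v d \<ge> 0"
    proof
      fix d assume dW: "d \<in> W"
      obtain v where "v \<in> K" "F v d \<ge> 0" "F v e \<ge> 0"
        using komiya_two[of M W F K d e, OF lin comb cont cvx KM cK vK _ dW eW] HK by blast
      then show "\<exists>v\<in>K'. F v d \<ge> 0" unfolding K'_def by blast
    qed
    have "K' \<subseteq> M" using KM K'_def by auto
    then obtain v where "v \<in> K'" "\<forall>d\<in>set ds. F v d \<ge> 0"
      using Cons.IH Cons.prems cK' vK' HK' by auto
    then show "\<exists>v\<in>K. \<forall>d\<in>set (e # ds). F v d \<ge> 0" unfolding K'_def by auto
  qed
qed

lemma komiya:
  fixes M :: "'a::real_normed_vector set" and W :: "'b::real_vector set"
    and F :: "'a \<Rightarrow> 'b \<Rightarrow> real"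
  assumes lin: "\<And>v d1 d2 a b. v \<in> M \<Longrightarrow> d1 \<in> W \<Longrightarrow> d2 \<in> W \<Longrightarrow>
                   F v (a *\<^sub>R d1 + b *\<^sub>R d2) = a * F v d1 + b * F v d2"
    and comb: "\<And>d1 d2 a b. d1 \<in> W \<Longrightarrow> d2 \<in> W \<Longrightarrow> a *\<^sub>R d1 + b *\<^sub>R d2 \<in> W"
    and cont: "\<And>d. d \<in> W \<Longrightarrow> continuous_on M (\<lambda>v. F v d)"
    and cvx: "\<And>d. d \<in> W \<Longrightarrow> convex {v\<in>M. F v d \<ge> 0}"
    and W0: "0 \<in> W"
    and cM: "compact M" and vM: "convex M"
    and HM: "\<And>d. d \<in> W \<Longrightarrow> \<exists>v\<in>M. F v d \<ge> 0"
  shows "\<exists>v\<in>M. \<forall>d\<in>W. F v d \<ge> 0"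
proof -
  define C where "C d = {v\<in>M. 0 \<le> F v d}" for d
  have clC: "closed (C d)" if "d \<in> W" for d
    unfolding C_def
    using continuous_on_closed_Collect_le[OF continuous_on_const cont[OF that] compact_imp_closed[OF cM]]
    by simp
  have fipB: "M \<inter> \<Inter>B \<noteq> {}" if B: "B \<subseteq> C ` W" "finite B" for B
  proof -
    obtain D where D: "D \<subseteq> W" "finite D" "B = C ` D" using B by (meson finite_subset_image)
    then obtain ds where ds: "set ds = D" using finite_list by blast
    have "\<exists>v\<in>M. \<forall>d\<in>set ds. F v d \<ge> 0"
      using komiya_list[of M W F ds, OF lin comb cont cvx W0] ds D cM vM HM by blast
    then obtain v where "v \<in> M" "\<forall>d\<in>set ds. F v d \<ge> 0" by blast
    then have "v \<in> M \<inter> \<Inter>B" using D ds C_def by auto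
    then show ?thesis by blast
  qed
  have "M \<inter> \<Inter>(C ` W) \<noteq> {}"
    using compact_fip[THEN iffD1, OF cM] clC fipB by blast
  then show ?thesis unfolding C_def by auto
qed

lemma dir_deriv:
  fixes \<Phi> :: "'a::real_normed_vector \<Rightarrow> real"
  assumes deriv: "\<forall>u. (\<Phi> has_derivative blinfun_apply (\<Phi>' u)) (at u)"
  shows "((\<lambda>s. \<Phi> (x + s *\<^sub>R a)) has_real_derivative (blinfun_apply (\<Phi>' (x + t *\<^sub>R a)) a)) (at t)"
proof -
  have i: "((\<lambda>s. x + s *\<^sub>R a) has_derivative (\<lambda>s. s *\<^sub>R a)) (at t)"
    by (auto intro!: derivative_eq_intros)
  have "((\<Phi> \<circ> (\<lambda>s. x + s *\<^sub>R a)) has_derivative (blinfun_apply (\<Phi>' (x + t *\<^sub>R a)) \<circ> (\<lambda>s. s *\<^sub>R a))) (at t)"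
    using diff_chain_at[OF i] deriv by blast
  moreover have "(blinfun_apply (\<Phi>' (x + t *\<^sub>R a)) \<circ> (\<lambda>s. s *\<^sub>R a)) = (\<lambda>s. (blinfun_apply (\<Phi>' (x + t *\<^sub>R a)) a) * s)"
    by (auto simp: o_def blinfun.scaleR_right)
  ultimately show ?thesis unfolding has_field_derivative_def by (simp add: o_def)
qed


theorem theorem1:
  fixes \<Phi> :: "'a::banach \<Rightarrow> real"
    and \<Phi>' :: "'a \<Rightarrow> ('a \<Rightarrow>\<^sub>L real)"
    and V W :: "'a set"
  assumes refl: "reflexive_space TYPE('a)"
    and subV: "subspace V" and subW: "subspace W" and closedW: "closed W"
    and inter: "V \<inter> W = {0}"
    and sum: "{v + w | v w. v \<in> V \<and> w \<in> W} = UNIV"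
    and finV: "\<exists>B. finite B \<and> V = span B"
    and deriv: "\<forall>u. (\<Phi> has_derivative blinfun_apply (\<Phi>' u)) (at u)"
    and C1: "continuous_on UNIV \<Phi>'"
    and coercive: "\<forall>M. \<exists>R. \<forall>w\<in>W. norm w \<ge> R \<longrightarrow> \<Phi> w \<ge> M"
    and qconc: "\<forall>w\<in>W. quasi_concave_on V (\<lambda>v. \<Phi> (v + w))"
    and anticoercive: "\<forall>r M. \<exists>R. \<forall>v\<in>V. \<forall>w\<in>W.
                          norm v \<ge> R \<and> norm w \<le> r \<longrightarrow> \<Phi> (v + w) \<le> M"
    and wlsc: "\<forall>v\<in>V. weakly_lsc_on W (\<lambda>w. \<Phi> (v + w))"
  shows "(\<forall>w\<in>W. \<exists>v\<in>V. \<forall>v'\<in>V. \<Phi> (v' + w) \<le> \<Phi> (v + w))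
       \<and> (\<exists>w0\<in>W. \<forall>w\<in>W. (SUP v\<in>V. \<Phi> (v + w0)) \<le> (SUP v\<in>V. \<Phi> (v + w)))
       \<and> (\<exists>u. \<Phi>' u = 0 \<and> \<Phi> u = (INF w\<in>W. SUP v\<in>V. \<Phi> (v + w)))"
proof -
  have sumx: "\<exists>a\<in>V. \<exists>b\<in>W. y = a + b" for y
  proof -
    have "y \<in> {v + w | v w. v \<in> V \<and> w \<in> W}" using sum by simp
    then show ?thesis by blast
  qed
  obtain B where finB: "finite B" and VB: "V = span B" using finV by blast
  have contP: "continuous_on UNIV \<Phi>"
    using deriv has_derivative_continuous continuous_at_imp_continuous_on by blast
  have isContP: "isCont \<Phi> x" for x using contP continuous_on_eq_continuous_at by blast
  have contPc: "continuous_on S (\<lambda>v. \<Phi> (v + a))" for S a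
    by (rule continuous_on_compose2[OF contP]) (auto intro: continuous_intros)
  have V0: "0 \<in> V" using subV subspace_0 by blast
  have W0: "0 \<in> W" using subW subspace_0 by blast
  have compV: "compact (V \<inter> cball 0 R)" for R using compact_span_cball[OF finB] VB by simp
  have clV: "closed V" using closed_span_finite[OF finB] VB by simp
  have Wcomb: "a *\<^sub>R d1 + b *\<^sub>R d2 \<in> W" if "d1 \<in> W" "d2 \<in> W" for a b d1 d2
    using that subW by (simp add: subspace_add subspace_scale)
  have Vcomb: "a *\<^sub>R d1 + b *\<^sub>R d2 \<in> V" if "d1 \<in> V" "d2 \<in> V" for a b d1 d2
    using that subV by (simp add: subspace_add subspace_scale)
  have maxv: "\<exists>v\<in>V. \<forall>v'\<in>V. \<Phi> (v' + w) \<le> \<Phi> (v + w)" if wW: "w \<in> W" for w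
  proof -
    obtain R where R: "\<forall>v\<in>V. \<forall>w'\<in>W. norm v \<ge> R \<and> norm w' \<le> norm w \<longrightarrow> \<Phi> (v + w') \<le> \<Phi> w - 1"
      using anticoercive by blast
    define K where "K = V \<inter> cball 0 (max R 0)"
    have "compact K" "0 \<in> K" using compV V0 unfolding K_def by auto
    then obtain v0 where v0: "v0 \<in> K" "\<forall>y\<in>K. \<Phi> (y + w) \<le> \<Phi> (v0 + w)"
      using continuous_attains_sup[of K "\<lambda>v. \<Phi> (v + w)"] contPc by blast
    show ?thesis
    proof (intro bexI ballI)
      show "v0 \<in> V" using v0 K_def by simp
      fix v' assume v': "v' \<in> V"
      show "\<Phi> (v' + w) \<le> \<Phi> (v0 + w)"
      proof (cases "norm v' \<le> max R 0")
        case True then show ?thesis using v0 v' K_def by simp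
      next
        case False
        then have "\<Phi> (v' + w) \<le> \<Phi> w - 1" using R v' wW by auto
        also have "\<dots> < \<Phi> (0 + w)" by simp
        also have "\<dots> \<le> \<Phi> (v0 + w)" using v0 \<open>0 \<in> K\<close> by blast
        finally show ?thesis by simp
      qed
    qed
  qed
  define m where "m w = (SUP v\<in>V. \<Phi> (v + w))" for w
  have bdd: "bdd_above ((\<lambda>v. \<Phi> (v + w)) ` V)" if "w \<in> W" for w
    using maxv[OF that] by (auto simp: bdd_above_def)
  have m_ub: "\<Phi> (v + w) \<le> m w" if "w \<in> W" "v \<in> V" for v w
    unfolding m_def using cSUP_upper[OF that(2) bdd[OF that(1)]] .
  have m_att: "\<exists>v\<in>V. m w = \<Phi> (v + w) \<and> (\<forall>v'\<in>V. \<Phi> (v' + w) \<le> \<Phi> (v + w))" if wW: "w \<in> W" for w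
  proof -
    obtain v where v: "v \<in> V" "\<forall>v'\<in>V. \<Phi> (v' + w) \<le> \<Phi> (v + w)" using maxv[OF wW] by blast
    have "m w = \<Phi> (v + w)" unfolding m_def using v by (intro cSup_eq_maximum) auto
    then show ?thesis using v by blast
  qed
  have m_le_iff: "m w \<le> a \<longleftrightarrow> (\<forall>v\<in>V. \<Phi> (v + w) \<le> a)" if "w \<in> W" for w a
    unfolding m_def using cSUP_le_iff[OF _ bdd[OF that]] V0 by blast
  have m_ge: "\<Phi> w \<le> m w" if "w \<in> W" for w using m_ub[OF that V0] by simp
  have sep: "\<exists>f::'a \<Rightarrow>\<^sub>L real. (\<forall>w\<in>W. blinfun_apply f w = 0) \<and> blinfun_apply f x \<noteq> 0" if "x \<notin> W" for x
    using sep_functional[OF subV subW closedW inter sumx finB VB that] .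
  obtain w0 where w0: "w0 \<in> W" "\<forall>w\<in>W. m w0 \<le> m w"
  proof -
    define a0 where "a0 = m 0"
    obtain R0 where R0: "\<forall>w\<in>W. norm w \<ge> R0 \<longrightarrow> \<Phi> w \<ge> a0 + 1" using coercive by blast
    define S where "S a = {w\<in>W. m w \<le> a}" for a
    define Kc where "Kc = {x\<in>W. \<forall>f::'a \<Rightarrow>\<^sub>L real. \<bar>blinfun_apply f x\<bar> \<le> max R0 0 * norm f}"
    have wc: "compactin weak_topology Kc" unfolding Kc_def by (rule weak_compact[OF refl sep])
    have SK: "S a \<subseteq> Kc" if "a \<le> a0" for a
    proof
      fix w assume "w \<in> S a"
      then have w: "w \<in> W" "m w \<le> a" unfolding S_def by auto
      then have "\<Phi> w < a0 + 1" using m_ge[OF w(1)] that by simp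
      then have nw: "norm w \<le> max R0 0" using R0 w(1) by force
      have "\<bar>blinfun_apply f w\<bar> \<le> max R0 0 * norm f" for f :: "'a \<Rightarrow>\<^sub>L real"
      proof -
        have "\<bar>blinfun_apply f w\<bar> \<le> norm f * norm w" using norm_blinfun[of f w] by simp
        also have "\<dots> \<le> norm f * max R0 0" using nw by (simp add: mult_left_mono)
        finally show ?thesis by (simp add: mult.commute)
      qed
      then show "w \<in> Kc" unfolding Kc_def using w by blast
    qed
    have Scl: "closedin (subtopology weak_topology W) (S a)" for a
    proof -
      have eq: "S a = \<Inter>((\<lambda>v. {x\<in>W. \<Phi> (v + x) \<le> a}) ` V)"
        unfolding S_def using m_le_iff V0 by auto
      have cl: "closedin (subtopology weak_topology W) {x\<in>W. \<Phi> (v + x) \<le> a}" if "v \<in> V" for v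
        using wlsc that unfolding weakly_lsc_on_def by blast
      show ?thesis unfolding eq
        by (rule closedin_Inter) (use V0 cl in auto)
    qed
    have SclK: "closedin (subtopology weak_topology Kc) (S a)" if "a \<le> a0" for a
    proof -
      obtain T where T: "closedin weak_topology T" "S a = T \<inter> W"
        using Scl[of a] unfolding closedin_subtopology by blast
      have "Kc \<subseteq> W" unfolding Kc_def by blast
      then have "S a = T \<inter> Kc" using T SK[OF that] by blast
      then show ?thesis unfolding closedin_subtopology using T(1) by blast
    qed
    have cs: "compact_space (subtopology weak_topology Kc)" using wc by (rule compact_space_subtopology)
    define U where "U = S ` {a. a \<le> a0 \<and> S a \<noteq> {}}"
    have Smono: "S a \<subseteq> S b" if "a \<le> b" for a b unfolding S_def using that by auto
    have "\<Inter>U \<noteq> {}"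
    proof (rule cs[unfolded compact_space_fip, rule_format], intro conjI allI impI)
      show "\<forall>C\<in>U. closedin (subtopology weak_topology Kc) C" unfolding U_def using SclK by blast
    next
      fix Fs assume Fs: "finite Fs \<and> Fs \<subseteq> U"
      then obtain A where A: "A \<subseteq> {a. a \<le> a0 \<and> S a \<noteq> {}}" "finite A" "Fs = S ` A"
        unfolding U_def by (meson finite_subset_image)
      show "\<Inter>Fs \<noteq> {}"
      proof (cases "A = {}")
        case True then show ?thesis using A by simp
      next
        case False
        define a where "a = Min A"
        have "a \<in> A" using False A(2) a_def by simp
        then have "S a \<noteq> {}" using A(1) by blast
        moreover have "S a \<subseteq> \<Inter>Fs"
        proof -
          have "S a \<subseteq> S b" if "b \<in> A" for b
            using Smono Min_le[OF A(2) that] a_def by blast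
          then show ?thesis using A(3) by blast
        qed
        ultimately show ?thesis by blast
      qed
    qed
    then obtain w0 where w0U: "w0 \<in> \<Inter>U" by blast
    have "0 \<in> S a0" unfolding S_def a0_def using W0 by simp
    then have "S a0 \<in> U" unfolding U_def by blast
    then have w0a: "w0 \<in> W" "m w0 \<le> a0" using w0U unfolding S_def by auto
    have "m w0 \<le> m w" if "w \<in> W" for w
    proof (cases "m w \<le> a0")
      case True
      then have "S (m w) \<in> U" unfolding U_def S_def using that by blast
      then show ?thesis using w0U unfolding S_def by blast
    next
      case False then show ?thesis using w0a by simp
    qed
    then show ?thesis using that w0a by blast
  qed
  define c where "c = m w0"
  have Ple: "\<Phi> (v + w0) \<le> c" if "v \<in> V" for v using m_ub[OF w0(1) that] c_def by simp
  have minw: "c \<le> m w" if "w \<in> W" for w using w0 that c_def by simp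
  have INFc: "(INF w\<in>W. m w) = c"
    using w0 c_def by (intro cInf_eq_minimum) auto
  define Ms where "Ms = {v\<in>V. c \<le> \<Phi> (v + w0)}"
  have MsV: "Ms \<subseteq> V" unfolding Ms_def by blast
  have Ms_eq: "\<Phi> (v + w0) = c" if "v \<in> Ms" for v using that Ple unfolding Ms_def by force
  have cMs: "compact Ms"
  proof -
    obtain R1 where R1: "\<forall>v\<in>V. \<forall>w'\<in>W. norm v \<ge> R1 \<and> norm w' \<le> norm w0 \<longrightarrow> \<Phi> (v + w') \<le> c - 1"
      using anticoercive by blast
    have "Ms = (V \<inter> cball 0 (max R1 0)) \<inter> {v. c \<le> \<Phi> (v + w0)}"
    proof -
      have "norm v \<le> max R1 0" if "v \<in> Ms" for v
      proof (rule ccontr)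
        assume "\<not> norm v \<le> max R1 0"
        then have "\<Phi> (v + w0) \<le> c - 1" using R1 that w0(1) MsV by auto
        then show False using Ms_eq[OF that] by simp
      qed
      then show ?thesis unfolding Ms_def by auto
    qed
    moreover have "closed {v. c \<le> \<Phi> (v + w0)}"
      by (rule closed_Collect_le) (auto intro: continuous_intros contPc)
    ultimately show ?thesis using compV by (simp add: compact_Int_closed)
  qed
  have vMs: "convex Ms"
    unfolding convex_def
  proof (intro ballI allI impI)
    fix x y :: 'a and u v :: real
    assume xy: "x \<in> Ms" "y \<in> Ms" and uv: "0 \<le> u" "0 \<le> v" "u + v = 1"
    have v1: "v = 1 - u" using uv by simp
    have zV: "u *\<^sub>R x + v *\<^sub>R y \<in> V" using Vcomb xy MsV by blast
    have q: "quasi_concave_on V (\<lambda>v. \<Phi> (v + w0))" using qconc w0(1) by blast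
    have "x \<in> V" "y \<in> V" "u \<le> 1" using xy MsV uv by auto
    then have "min (\<Phi> (x + w0)) (\<Phi> (y + w0)) \<le> \<Phi> (u *\<^sub>R x + (1 - u) *\<^sub>R y + w0)"
      using q uv(1) unfolding quasi_concave_on_def by blast
    then have "c \<le> \<Phi> (u *\<^sub>R x + v *\<^sub>R y + w0)" using Ms_eq xy v1 by simp
    then show "u *\<^sub>R x + v *\<^sub>R y \<in> Ms" unfolding Ms_def using zV by blast
  qed
  define F where "F v d = blinfun_apply (\<Phi>' (v + w0)) d" for v d
  have lin: "F v (a *\<^sub>R d1 + b *\<^sub>R d2) = a * F v d1 + b * F v d2" for v d1 d2 a b
    unfolding F_def by (simp add: blinfun.add_right blinfun.scaleR_right)
  have contF: "continuous_on Ms (\<lambda>v. F v d)" for d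
  proof -
    have "continuous_on Ms (\<lambda>v. \<Phi>' (v + w0))"
      by (rule continuous_on_compose2[OF C1]) (auto intro: continuous_intros)
    then show ?thesis unfolding F_def by (intro blinfun.continuous_on continuous_on_const)
  qed
  have stepA: "F v a = 0" if "v \<in> Ms" "a \<in> V" for v a
  proof -
    have der: "((\<lambda>s. \<Phi> ((v + w0) + s *\<^sub>R a)) has_real_derivative F v a) (at 0)"
      using dir_deriv[OF deriv, of "v + w0" a 0] unfolding F_def by simp
    have "\<forall>y. \<bar>0 - y\<bar> < 1 \<longrightarrow> \<Phi> ((v + w0) + y *\<^sub>R a) \<le> \<Phi> ((v + w0) + 0 *\<^sub>R a)"
    proof (intro allI impI)
      fix y :: real
      have "v + y *\<^sub>R a \<in> V" using Vcomb[of v a 1 y] that MsV by auto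
      then have "\<Phi> ((v + y *\<^sub>R a) + w0) \<le> c" by (rule Ple)
      moreover have "(v + y *\<^sub>R a) + w0 = (v + w0) + y *\<^sub>R a" by (simp add: algebra_simps)
      ultimately show "\<Phi> ((v + w0) + y *\<^sub>R a) \<le> \<Phi> ((v + w0) + 0 *\<^sub>R a)" using Ms_eq[OF that(1)] by simp
    qed
    then show ?thesis using DERIV_local_max[OF der, of 1] by simp
  qed
  have limq: "((\<lambda>t. (\<Phi> (v + w0 + t *\<^sub>R d) - c) / t) \<longlongrightarrow> F v d) (at_right 0)" if "v \<in> Ms" for v d
  proof -
    have "((\<lambda>s. \<Phi> ((v + w0) + s *\<^sub>R d)) has_real_derivative F v d) (at 0)"
      using dir_deriv[OF deriv, of "v + w0" d 0] unfolding F_def by simp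
    then have "((\<lambda>y. (\<Phi> ((v + w0) + y *\<^sub>R d) - \<Phi> ((v + w0) + 0 *\<^sub>R d)) / (y - 0)) \<longlongrightarrow> F v d) (at 0)"
      unfolding has_field_derivative_iff .
    then have "((\<lambda>t. (\<Phi> (v + w0 + t *\<^sub>R d) - c) / t) \<longlongrightarrow> F v d) (at 0)"
      using Ms_eq[OF that] by simp
    then show ?thesis by (rule tendsto_mono[OF at_within_le_at])
  qed
  have cvx: "convex {v\<in>Ms. F v d \<ge> 0}" if dW: "d \<in> W" for d
    unfolding convex_def
  proof (intro ballI allI impI)
    fix x y :: 'a and u v :: real
    assume xy: "x \<in> {v\<in>Ms. F v d \<ge> 0}" "y \<in> {v\<in>Ms. F v d \<ge> 0}" and uv: "0 \<le> u" "0 \<le> v" "u + v = 1"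
    define z where "z = u *\<^sub>R x + v *\<^sub>R y"
    have zMs: "z \<in> Ms" using vMs xy uv unfolding convex_def z_def by blast
    have ev: "\<forall>\<^sub>F t in at_right 0. min ((\<Phi> (x + w0 + t *\<^sub>R d) - c) / t) ((\<Phi> (y + w0 + t *\<^sub>R d) - c) / t)
                 \<le> (\<Phi> (z + w0 + t *\<^sub>R d) - c) / t"
      using eventually_at_right_less[of "0::real"]
    proof (rule eventually_mono)
      fix t :: real assume t: "0 < t"
      have wt: "w0 + t *\<^sub>R d \<in> W" using Wcomb[of w0 d 1 t] w0(1) dW by simp
      have q: "quasi_concave_on V (\<lambda>v. \<Phi> (v + (w0 + t *\<^sub>R d)))" using qconc wt by blast
      have "x \<in> V" "y \<in> V" "u \<le> 1" using xy MsV uv by auto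
      then have "min (\<Phi> (x + (w0 + t *\<^sub>R d))) (\<Phi> (y + (w0 + t *\<^sub>R d))) \<le> \<Phi> (u *\<^sub>R x + (1 - u) *\<^sub>R y + (w0 + t *\<^sub>R d))"
        using q uv(1) unfolding quasi_concave_on_def by blast
      moreover have "1 - u = v" using uv by simp
      ultimately have "min (\<Phi> (x + w0 + t *\<^sub>R d)) (\<Phi> (y + w0 + t *\<^sub>R d)) \<le> \<Phi> (z + w0 + t *\<^sub>R d)"
        unfolding z_def by (simp add: add.assoc)
      then have "\<Phi> (x + w0 + t *\<^sub>R d) \<le> \<Phi> (z + w0 + t *\<^sub>R d) \<or> \<Phi> (y + w0 + t *\<^sub>R d) \<le> \<Phi> (z + w0 + t *\<^sub>R d)"
        by linarith
      then show "min ((\<Phi> (x + w0 + t *\<^sub>R d) - c) / t) ((\<Phi> (y + w0 + t *\<^sub>R d) - c) / t)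
                 \<le> (\<Phi> (z + w0 + t *\<^sub>R d) - c) / t"
        using t by (auto simp: divide_right_mono min_le_iff_disj)
    qed
    have "min (F x d) (F y d) \<le> F z d"
      by (rule tendsto_le[OF trivial_limit_at_right_real limq[OF zMs] tendsto_min[OF limq limq] ev])
        (use xy in auto)
    then show "u *\<^sub>R x + v *\<^sub>R y \<in> {v\<in>Ms. F v d \<ge> 0}" using xy zMs z_def by auto
  qed
  have stepB: "\<exists>v\<in>Ms. F v d \<ge> 0" if dW: "d \<in> W" for d
  proof -
    define tn where "tn n = inverse (real (Suc n))" for n
    define wn where "wn n = w0 + tn n *\<^sub>R d" for n
    have tn_pos: "0 < tn n" "tn n \<le> 1" for n unfolding tn_def by (auto simp: field_simps)
    have wnW: "wn n \<in> W" for n unfolding wn_def using Wcomb[of w0 d 1 "tn n"] w0(1) dW by simp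
    have "\<forall>n. \<exists>v. v \<in> V \<and> c \<le> \<Phi> (v + wn n)"
    proof
      fix n
      obtain v where v: "v \<in> V" "m (wn n) = \<Phi> (v + wn n)" using m_att[OF wnW[of n]] by blast
      then have "c \<le> \<Phi> (v + wn n)" using minw[OF wnW[of n]] by simp
      then show "\<exists>v. v \<in> V \<and> c \<le> \<Phi> (v + wn n)" using v(1) by blast
    qed
    then obtain vn where vn: "\<And>n. vn n \<in> V" "\<And>n. c \<le> \<Phi> (vn n + wn n)" by metis
    obtain R2 where R2: "\<forall>v\<in>V. \<forall>w'\<in>W. norm v \<ge> R2 \<and> norm w' \<le> norm w0 + norm d \<longrightarrow> \<Phi> (v + w') \<le> c - 1"
      using anticoercive by blast
    have nwn: "norm (wn n) \<le> norm w0 + norm d" for n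
    proof -
      have "norm (wn n) \<le> norm w0 + norm (tn n *\<^sub>R d)" unfolding wn_def by (rule norm_triangle_ineq)
      also have "norm (tn n *\<^sub>R d) \<le> norm d" using tn_pos[of n] by (simp add: mult_left_le_one_le)
      finally show ?thesis by simp
    qed
    have "norm (vn n) \<le> R2" for n
    proof (rule ccontr)
      assume "\<not> norm (vn n) \<le> R2"
      then have "\<Phi> (vn n + wn n) \<le> c - 1" using R2 vn(1) wnW nwn by auto
      then show False using vn(2)[of n] by simp
    qed
    then have "bounded (range vn)" unfolding bounded_iff by blast
    then obtain vb r where r: "strict_mono r" "(vn \<circ> r) \<longlonglongrightarrow> vb"
      using span_bounded_subseq[OF finB] vn(1) VB by blast
    have vbV: "vb \<in> V" using clV r(2) vn(1) closed_sequentially[of V "vn \<circ> r"] by auto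
    have tn0: "tn \<longlonglongrightarrow> 0" unfolding tn_def by (rule LIMSEQ_inverse_real_of_nat)
    have "\<forall>n. \<exists>z. 0 < z \<and> z < tn n \<and> 0 \<le> F (vn n + z *\<^sub>R d) d"
    proof
      fix n
      have "\<exists>z. 0 < z \<and> z < tn n \<and> \<Phi> ((vn n + w0) + tn n *\<^sub>R d) - \<Phi> ((vn n + w0) + 0 *\<^sub>R d)
              = (tn n - 0) * blinfun_apply (\<Phi>' ((vn n + w0) + z *\<^sub>R d)) d"
        by (rule MVT2[OF tn_pos(1)]) (rule dir_deriv[OF deriv])
      then obtain z where z: "0 < z" "z < tn n"
        "\<Phi> ((vn n + w0) + tn n *\<^sub>R d) - \<Phi> (vn n + w0) = tn n * blinfun_apply (\<Phi>' ((vn n + w0) + z *\<^sub>R d)) d"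
        by auto
      have "\<Phi> ((vn n + w0) + tn n *\<^sub>R d) = \<Phi> (vn n + wn n)" unfolding wn_def by (simp add: add.assoc)
      then have "0 \<le> tn n * blinfun_apply (\<Phi>' ((vn n + w0) + z *\<^sub>R d)) d"
        using z(3) vn(2)[of n] Ple[OF vn(1)[of n]] by simp
      then have "0 \<le> blinfun_apply (\<Phi>' ((vn n + w0) + z *\<^sub>R d)) d"
        using tn_pos(1)[of n] by (simp add: zero_le_mult_iff)
      moreover have "(vn n + w0) + z *\<^sub>R d = (vn n + z *\<^sub>R d) + w0" by (simp add: algebra_simps)
      ultimately show "\<exists>z. 0 < z \<and> z < tn n \<and> 0 \<le> F (vn n + z *\<^sub>R d) d"
        unfolding F_def using z by metis
    qed
    then obtain zn where zn: "\<And>n. 0 < zn n" "\<And>n. zn n < tn n" "\<And>n. 0 \<le> F (vn n + zn n *\<^sub>R d) d"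
      by metis
    have zn0: "zn \<longlonglongrightarrow> 0"
      by (rule real_tendsto_sandwich[of "\<lambda>n. 0" _ _ tn]) (use zn tn0 in \<open>auto intro!: always_eventually less_imp_le\<close>)
    have lim1: "(\<lambda>n. (vn (r n) + zn (r n) *\<^sub>R d) + w0) \<longlonglongrightarrow> (vb + 0 *\<^sub>R d) + w0"
      using r(2) LIMSEQ_subseq_LIMSEQ[OF zn0 r(1)] by (intro tendsto_intros) (auto simp: o_def)
    have isC: "isCont \<Phi>' x" for x using C1 continuous_on_eq_continuous_at by blast
    have "(\<lambda>n. F (vn (r n) + zn (r n) *\<^sub>R d) d) \<longlonglongrightarrow> F vb d"
      unfolding F_def using isCont_tendsto_compose[OF isC lim1]
      by (intro blinfun.tendsto tendsto_const) simp_all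
    then have Fvb: "0 \<le> F vb d" using zn(3) by (intro LIMSEQ_le_const) auto
    have wn0: "wn \<longlonglongrightarrow> w0 + 0 *\<^sub>R d" unfolding wn_def by (intro tendsto_intros tn0)
    have "(\<lambda>n. vn (r n) + wn (r n)) \<longlonglongrightarrow> vb + (w0 + 0 *\<^sub>R d)"
      using r(2) LIMSEQ_subseq_LIMSEQ[OF wn0 r(1)] by (intro tendsto_intros) (auto simp: o_def)
    then have "(\<lambda>n. \<Phi> (vn (r n) + wn (r n))) \<longlonglongrightarrow> \<Phi> (vb + w0)"
      using isCont_tendsto_compose[OF isContP] by simp
    then have "c \<le> \<Phi> (vb + w0)" using vn(2) by (intro LIMSEQ_le_const) auto
    then have "vb \<in> Ms" unfolding Ms_def using vbV by blast
    then show ?thesis using Fvb by blast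
  qed
  \<comment> \<open>Conclusion via the Sion-type argument\<close>
  obtain vs where vs: "vs \<in> Ms" "\<forall>d\<in>W. F vs d \<ge> 0"
    using komiya[of Ms W F, OF lin Wcomb contF cvx W0 cMs vMs stepB] by blast
  have crit: "\<Phi>' (vs + w0) = 0"
  proof (rule blinfun_eqI)
    fix y
    obtain a b where ab: "a \<in> V" "b \<in> W" "y = a + b" using sumx by blast
    have "- b \<in> W" using ab(2) subW by (simp add: subspace_neg)
    then have "0 \<le> F vs (- b)" "0 \<le> F vs b" using vs ab by auto
    moreover have "F vs (- b) = - F vs b" unfolding F_def by (simp add: blinfun.minus_right)
    ultimately have "F vs b = 0" by simp
    moreover have "F vs a = 0" using stepA[OF vs(1) ab(1)] .
    ultimately show "blinfun_apply (\<Phi>' (vs + w0)) y = blinfun_apply 0 y"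
      using ab(3) unfolding F_def by (simp add: blinfun.add_right)
  qed
  have "\<Phi> (vs + w0) = (INF w\<in>W. m w)" using Ms_eq[OF vs(1)] INFc by simp
  then have part3: "\<exists>u. \<Phi>' u = 0 \<and> \<Phi> u = (INF w\<in>W. SUP v\<in>V. \<Phi> (v + w))"
    using crit unfolding m_def by blast
  have part2: "\<exists>w0\<in>W. \<forall>w\<in>W. (SUP v\<in>V. \<Phi> (v + w0)) \<le> (SUP v\<in>V. \<Phi> (v + w))"
    using w0 unfolding m_def by blast
  show ?thesis using maxv part2 part3 by blast
qed

end
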